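(* Let $S$ be an instance of 3-Partition (with $n_1\ge\cdots\ge n_{3m}$), let $\langle i_k\rangle_{k=1}^{3m}$ be non-negative integers with $i_{3j-2}+i_{3j-1}+i_{3j}=B$ for every $j\in\{1,\dots,m\}$, and let $W=\prod_{k=1}^{3m}(a_1b^{i_k}a_2)$. Suppose that $W\,\|\,\mathrm{Ver}_S\vdash^*\varepsilon\,\|\,\varepsilon$ via a computation satisfying the V-Condition (so that $\varepsilon\,\|\,w_S\vdash^*\varepsilon\,\|\,\varepsilon$ and $w_S$ is a square). Then $S$ is a "yes" instance of 3-Partition.
   Context: Queue automaton: a configuration is written $Q\,\|\,x$ ($Q$ = queue contents, $x$ = remaining input); a step from $Q\,\|\,\sigma x$ ($\sigma$ a symbol) goes either to $Q\sigma\,\|\,x$ (push the input symbol) or, if $Q=\sigma Q'$, to $Q'\,\|\,x$ (the input symbol is matched against the leftmost queue symbol, which is popped; that queue symbol was pushed from an earlier input position and the two occurrences are said to be matched). $\vdash^*$ is zero or more steps; $\varepsilon$ is the empty string. A string $w$ is a square if it is a shuffle of some string with itself. An instance of 3-Partition is a sequence $S=\langle n_i:1\le i\le 3m\rangle$ of natural numbers such that $B=(\sum_{i=1}^{3m}n_i)/m$ is an integer and $B/4<n_i<B/2$ for all $i$; it is a "yes" instance if it can be partitioned into $m$ disjoint subsequences each with exactly three elements summing to $B$. Throughout, the $n_i$ are in non-increasing order. Alphabet $\{a_1,a_2,b,e_0,e,c_1,c_2,x,y\}$; $u^i$ is $i$ copies of $u$ concatenated, $\prod_{\ell=1}^k u_\ell=u_1\cdots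 u_k$. Define $U_\ell=a_1^2b^\ell a_2^2$, $v_\ell=c_1x^\ell y^\ell c_2$, $D_k=U_{n_k}^{3m-k+1}$, $E_k=U_B^{3m-k}\,a_1b^{n_k}a_2\,U_B^{3m-k}$, $F_k=U_B^{2(3m-k)}$, $\mathrm{Load}_S=e_0\prod_{i=1}^m(b^{2B}e)$, $\mathrm{Dist}_S=e_0\prod_{i=1}^m((a_1b^Ba_2)^3e)$, $\mathrm{Ver}_S=\prod_{k=1}^{3m}[v_{4k-3}D_kv_{4k-3}\,v_{4k-2}D_kv_{4k-2}\,v_{4k-1}E_kv_{4k-1}\,v_{4k}F_kv_{4k}]$, $w_S=\mathrm{Load}_S\mathrm{Dist}_S\mathrm{Ver}_S$. Each $v_\ell$ ($1\le\ell\le 12m$) occurs exactly twice in $\mathrm{Ver}_S$. A computation satisfies the V-Condition if for each $\ell$ with $1\le\ell\le12m$ the symbols of the second occurrence of $v_\ell$ are all matched against the corresponding symbols of the first occurrence of $v_\ell$. *)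

theory Defs
  imports Main
begin

datatype sym = A1 | A2 | Bs | E0 | E | C1 | C2 | X | Y

(* queue automaton run, tracking matchings by input positions.
   Queue entries: (symbol, tag); tag = Some p if pushed from input position p (0-based),
   None if the symbol was in the initial queue.
   qrun w Q i M : from configuration  Q || drop i w  the automaton reaches  eps || eps,
   and M is the set of matchings (tag of popped queue symbol, input position) performed. *)
inductive qrun :: "sym list \<Rightarrow> (sym \<times> nat option) list \<Rightarrow> nat \<Rightarrow> (nat option \<times> nat) set \<Rightarrow> bool"
  for w :: "sym list" where
  fin: "qrun w [] (length w) {}"
| push: "i < length w \<Longrightarrow> qrun w (Q @ [(w ! i, Some i)]) (Suc i) M \<Longrightarrow> qrun w Q i M"
| pop: "i < length w \<Longrightarrow> qrun w Q (Suc i) M \<Longrightarrow> qrun w ((w ! i, t) # Q) i (insert (t, i) M)"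

(* 3-Partition; the sequence is ns with n_k = ns ! (k-1), k = 1..3m *)
definition is_3part_instance :: "nat list \<Rightarrow> nat \<Rightarrow> nat \<Rightarrow> bool" where
  "is_3part_instance ns m B \<longleftrightarrow> m > 0 \<and> length ns = 3 * m \<and> sum_list ns = m * B \<and>
     (\<forall>x\<in>set ns. B < 4 * x \<and> 2 * x < B)"

definition is_yes_3part :: "nat list \<Rightarrow> nat \<Rightarrow> nat \<Rightarrow> bool" where
  "is_yes_3part ns m B \<longleftrightarrow> (\<exists>f :: nat \<Rightarrow> nat. (\<forall>i<3*m. f i < m) \<and>
     (\<forall>j<m. card {i. i < 3*m \<and> f i = j} = 3 \<and> (\<Sum>i | i < 3*m \<and> f i = j. ns ! i) = B))"

definition nn :: "nat list \<Rightarrow> nat \<Rightarrow> nat" where "nn ns k = ns ! (k - 1)"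

definition pw :: "sym list \<Rightarrow> nat \<Rightarrow> sym list" where "pw u i = concat (replicate i u)"

definition U :: "nat \<Rightarrow> sym list" where "U l = [A1, A1] @ replicate l Bs @ [A2, A2]"
definition v :: "nat \<Rightarrow> sym list" where "v l = [C1] @ replicate l X @ replicate l Y @ [C2]"

definition Dw :: "nat list \<Rightarrow> nat \<Rightarrow> nat \<Rightarrow> sym list" where
  "Dw ns m k = pw (U (nn ns k)) (3*m - k + 1)"
definition Ew :: "nat list \<Rightarrow> nat \<Rightarrow> nat \<Rightarrow> nat \<Rightarrow> sym list" where
  "Ew ns m B k = pw (U B) (3*m - k) @ [A1] @ replicate (nn ns k) Bs @ [A2] @ pw (U B) (3*m - k)"
definition Fw :: "nat \<Rightarrow> nat \<Rightarrow> nat \<Rightarrow> sym list" where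
  "Fw m B k = pw (U B) (2 * (3*m - k))"

definition Ver :: "nat list \<Rightarrow> nat \<Rightarrow> nat \<Rightarrow> sym list" where
  "Ver ns m B = concat (map (\<lambda>k.
       v (4*k-3) @ Dw ns m k @ v (4*k-3) @ v (4*k-2) @ Dw ns m k @ v (4*k-2) @
       v (4*k-1) @ Ew ns m B k @ v (4*k-1) @ v (4*k) @ Fw m B k @ v (4*k)) [1..<3*m+1])"

(* the middle part between the two occurrences of v_l, l = 1..12m *)
definition mid :: "nat list \<Rightarrow> nat \<Rightarrow> nat \<Rightarrow> nat \<Rightarrow> sym list" where
  "mid ns m B l = (let k = (l + 3) div 4; r = (l - 1) mod 4 in
     if r = 0 \<or> r = 1 then Dw ns m k else if r = 2 then Ew ns m B k else Fw m B k)"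

definition blk :: "nat list \<Rightarrow> nat \<Rightarrow> nat \<Rightarrow> nat \<Rightarrow> sym list" where
  "blk ns m B l = v l @ mid ns m B l @ v l"

(* 0-based position in Ver of the first symbol of the first occurrence of v_l *)
definition voff :: "nat list \<Rightarrow> nat \<Rightarrow> nat \<Rightarrow> nat \<Rightarrow> nat" where
  "voff ns m B l = length (concat (map (blk ns m B) [1..<l]))"

definition V_condition :: "nat list \<Rightarrow> nat \<Rightarrow> nat \<Rightarrow> (nat option \<times> nat) set \<Rightarrow> bool" where
  "V_condition ns m B M \<longleftrightarrow> (\<forall>l. 1 \<le> l \<and> l \<le> 12*m \<longrightarrow>
     (\<forall>j < length (v l).
        (Some (voff ns m B l + j),
         voff ns m B l + length (v l) + length (mid ns m B l) + j) \<in> M))"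

definition Wq :: "nat \<Rightarrow> (nat \<Rightarrow> nat) \<Rightarrow> sym list" where
  "Wq m ik = concat (map (\<lambda>k. [A1] @ replicate (ik k) Bs @ [A2]) [1..<3*m+1])"

end

theory Submission
  imports Defs "HOL-Library.Sublist" "HOL-Combinatorics.Permutations"
begin


lemma shuffles_append_split:
  "zs \<in> shuffles xs ys \<Longrightarrow> zs = z1 @ z2 \<Longrightarrow>
   \<exists>x1 x2 y1 y2. xs = x1 @ x2 \<and> ys = y1 @ y2 \<and> z1 \<in> shuffles x1 y1 \<and> z2 \<in> shuffles x2 y2"
proof (induction z1 arbitrary: zs xs ys)
  case Nil
  then show ?case by (intro exI[of _ "[]"] exI[of _ xs] exI[of _ ys]) auto
next
  case (Cons a z1)
  then have "a # (z1 @ z2) \<in> shuffles xs ys" by simp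
  then consider (L) "xs \<noteq> []" "hd xs = a" "z1 @ z2 \<in> shuffles (tl xs) ys"
    | (R) "ys \<noteq> []" "hd ys = a" "z1 @ z2 \<in> shuffles xs (tl ys)"
    by (auto simp: Cons_in_shuffles_iff)
  then show ?case
  proof cases
    case L
    from Cons.IH[OF L(3) refl] obtain x1 x2 y1 y2 where
      h: "tl xs = x1 @ x2" "ys = y1 @ y2" "z1 \<in> shuffles x1 y1" "z2 \<in> shuffles x2 y2" by blast
    show ?thesis
      apply (rule exI[of _ "a # x1"], rule exI[of _ x2], rule exI[of _ y1], rule exI[of _ y2])
      using h L by (cases xs) (auto intro: Cons_in_shuffles_leftI)
  next
    case R
    from Cons.IH[OF R(3) refl] obtain x1 x2 y1 y2 where
      h: "xs = x1 @ x2" "tl ys = y1 @ y2" "z1 \<in> shuffles x1 y1" "z2 \<in> shuffles x2 y2" by blast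
    show ?thesis
      apply (rule exI[of _ x1], rule exI[of _ x2], rule exI[of _ "a # y1"], rule exI[of _ y2])
      using h R by (cases ys) (auto intro: Cons_in_shuffles_rightI)
  qed
qed

lemma shuffles_subseq: "zs \<in> shuffles xs ys \<Longrightarrow> subseq xs zs"
proof (induction zs arbitrary: xs ys)
  case Nil
  then show ?case by simp
next
  case (Cons z zs)
  then consider (L) "xs \<noteq> []" "hd xs = z" "zs \<in> shuffles (tl xs) ys"
    | (R) "ys \<noteq> []" "hd ys = z" "zs \<in> shuffles xs (tl ys)"
    by (auto simp: Cons_in_shuffles_iff)
  then show ?case
  proof cases
    case L
    then have "subseq (tl xs) zs" using Cons.IH by blast
    then show ?thesis using L by (cases xs) auto
  next
    case R
    then have "subseq xs zs" using Cons.IH by blast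
    then show ?thesis by auto
  qed
qed

lemma replicate_shuffles:
  "zs \<in> shuffles xs ys \<Longrightarrow> zs = replicate n c \<Longrightarrow>
    \<exists>a b. xs = replicate a c \<and> ys = replicate b c \<and> a + b = n"
proof -
  assume a: "zs \<in> shuffles xs ys" "zs = replicate n c"
  have "set xs \<subseteq> {c}" "set ys \<subseteq> {c}" using set_shuffles[OF a(1)] a(2) by auto
  moreover have "length xs + length ys = n" using length_shuffles[OF a(1)] a(2) by simp
  ultimately show ?thesis
    by (metis replicate_length_same singletonD subset_eq)
qed



definition atomw :: "nat \<times> nat \<times> nat \<Rightarrow> sym list" where
  "atomw x = (case x of (s,k,t) \<Rightarrow> replicate s A1 @ replicate k Bs @ replicate t A2)"

fun cmp :: "nat \<Rightarrow> nat \<times> nat \<times> nat \<Rightarrow> nat \<times> nat \<times> nat" where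
  "cmp c (s,k,t) = (2-s, c-k, 2-t)"

fun bnd :: "nat \<Rightarrow> nat \<times> nat \<times> nat \<Rightarrow> bool" where
  "bnd c (s,k,t) = (s \<le> 2 \<and> k \<le> c \<and> t \<le> 2)"

fun strict :: "nat \<times> nat \<times> nat \<Rightarrow> bool" where
  "strict (s,k,t) = (1 \<le> s \<and> 1 \<le> t)"

lemma atom_shuffle:
  assumes "replicate i A1 @ replicate j Bs @ replicate l A2 \<in> shuffles Xs Ys"
  shows "\<exists>s k t. s \<le> i \<and> k \<le> j \<and> t \<le> l \<and> Xs = atomw (s,k,t) \<and> Ys = atomw (i-s, j-k, l-t)"
proof -
  obtain x1 x2 y1 y2 where h1: "Xs = x1 @ x2" "Ys = y1 @ y2" "replicate i A1 \<in> shuffles x1 y1"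
      "replicate j Bs @ replicate l A2 \<in> shuffles x2 y2"
    using shuffles_append_split[OF assms refl] by blast
  obtain x3 x4 y3 y4 where h2: "x2 = x3 @ x4" "y2 = y3 @ y4" "replicate j Bs \<in> shuffles x3 y3"
      "replicate l A2 \<in> shuffles x4 y4"
    using shuffles_append_split[OF h1(4) refl] by blast
  obtain a1 b1 where r1: "x1 = replicate a1 A1" "y1 = replicate b1 A1" "a1 + b1 = i"
    using replicate_shuffles[OF h1(3) refl] by blast
  obtain a2 b2 where r2: "x3 = replicate a2 Bs" "y3 = replicate b2 Bs" "a2 + b2 = j"
    using replicate_shuffles[OF h2(3) refl] by blast
  obtain a3 b3 where r3: "x4 = replicate a3 A2" "y4 = replicate b3 A2" "a3 + b3 = l"
    using replicate_shuffles[OF h2(4) refl] by blast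
  show ?thesis
    apply (rule exI[of _ a1], rule exI[of _ a2], rule exI[of _ a3])
    using r1 r2 r3 h1 h2 unfolding atomw_def by auto
qed

lemma U_atom: "U c = atomw (2,c,2)"
  by (simp add: U_def atomw_def numeral_2_eq_2)

lemma pw_Suc: "pw u (Suc n) = u @ pw u n"
  by (simp add: pw_def)

lemma pw_0[simp]: "pw u 0 = []"
  by (simp add: pw_def)

lemma pw_add: "pw u (a + b) = pw u a @ pw u b"
  by (simp add: pw_def replicate_add)

lemma pw_atoms:
  "pw (U c) N \<in> shuffles Xs Ys \<Longrightarrow>
   \<exists>ys. length ys = N \<and> Xs = concat (map atomw ys) \<and> Ys = concat (map (atomw \<circ> cmp c) ys)
        \<and> (\<forall>y\<in>set ys. bnd c y)"
proof (induction N arbitrary: Xs Ys)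
  case 0
  then show ?case by (intro exI[of _ "[]"]) simp
next
  case (Suc N)
  then have "U c @ pw (U c) N \<in> shuffles Xs Ys" by (simp add: pw_Suc)
  then obtain x1 x2 y1 y2 where h: "Xs = x1 @ x2" "Ys = y1 @ y2" "U c \<in> shuffles x1 y1"
      "pw (U c) N \<in> shuffles x2 y2"
    using shuffles_append_split[OF _ refl] by metis
  obtain ys where ys: "length ys = N" "x2 = concat (map atomw ys)"
     "y2 = concat (map (atomw \<circ> cmp c) ys)" "\<forall>y\<in>set ys. bnd c y"
    using Suc.IH[OF h(4)] by blast
  have "replicate 2 A1 @ replicate c Bs @ replicate 2 A2 \<in> shuffles x1 y1"
    using h(3) by (simp only: U_atom atomw_def prod.case)
  then obtain s k t where a: "s \<le> 2" "k \<le> c" "t \<le> 2" "x1 = atomw (s,k,t)" "y1 = atomw (2-s,c-k,2-t)"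
    using atom_shuffle by blast
  show ?case
    apply (rule exI[of _ "(s,k,t) # ys"])
    using ys a h by (simp add: comp_def)
qed

fun rk :: "sym \<Rightarrow> nat" where
  "rk A1 = 0" | "rk Bs = 1" | "rk A2 = 2" | "rk _ = 3"

fun adv :: "sym list \<Rightarrow> nat" where
  "adv [] = 0"
| "adv [x] = 0"
| "adv (x # y # zs) = (if rk y < rk x then 1 else 0) + adv (y # zs)"

lemma adv_Cons: "adv (x # xs) = (if xs \<noteq> [] \<and> rk (hd xs) < rk x then 1 else 0) + adv xs"
  by (cases xs) auto

lemma adv_append:
  "adv (xs @ ys) = adv xs + adv ys + (if xs \<noteq> [] \<and> ys \<noteq> [] \<and> rk (hd ys) < rk (last xs) then 1 else 0)"
proof (induction xs)
  case Nil
  then show ?case by simp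
next
  case (Cons x xs)
  then show ?case by (cases xs) (auto simp: adv_Cons)
qed

lemma adv_emb: "list_emb (=) xs zs \<Longrightarrow> adv xs \<le> adv zs \<and> (\<forall>a. adv (a # xs) \<le> adv (a # zs))"
proof (induction rule: list_emb.induct)
  case (list_emb_Nil ys)
  then show ?case by (simp add: adv_Cons)
next
  case (list_emb_Cons xs ys y)
  have "adv ys \<le> adv (y # ys)" by (simp add: adv_Cons)
  moreover have "adv (a # ys) \<le> adv (a # y # ys)" for a
    by (cases ys) (simp_all add: adv_Cons)
  ultimately show ?case using list_emb_Cons.IH by (meson order_trans)
next
  case (list_emb_Cons2 x y xs ys)
  then show ?case by (auto simp: adv_Cons)
qed

lemma adv_subseq: "subseq xs zs \<Longrightarrow> adv xs \<le> adv zs"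
  using adv_emb by blast

lemma adv_shuffles: "zs \<in> shuffles xs ys \<Longrightarrow> adv xs \<le> adv zs"
  using adv_subseq shuffles_subseq by blast

lemma adv_sorted: "sorted (map rk xs) \<Longrightarrow> adv xs = 0"
  by (induction xs rule: adv.induct) auto

lemma adv_atomw[simp]: "adv (atomw x) = 0"
  by (cases x) (auto simp: atomw_def intro!: adv_sorted simp: sorted_append)

lemma atomw_nonempty: "strict x \<Longrightarrow> atomw x \<noteq> []"
  by (cases x) (auto simp: atomw_def)

lemma atomw_hd: "strict x \<Longrightarrow> hd (atomw x) = A1"
  by (cases x) (auto simp: atomw_def hd_append hd_replicate)

lemma atomw_last: "strict x \<Longrightarrow> last (atomw x) = A2"
  by (cases x) (auto simp: atomw_def last_append)

lemma adv_concat_le: "(\<forall>x\<in>set xs. adv x = 0) \<Longrightarrow> adv (concat xs) \<le> length xs - 1"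
proof (induction xs)
  case Nil
  then show ?case by simp
next
  case (Cons x xs)
  then show ?case by (cases xs) (auto simp: adv_append)
qed

lemma adv_concat_atoms_le: "adv (concat (map atomw ys)) \<le> length ys - 1"
  using adv_concat_le[of "map atomw ys"] by simp

lemma adv_concat_ge:
  "z \<noteq> [] \<Longrightarrow> last z = A2 \<Longrightarrow> (\<forall>x\<in>set xs. strict x) \<Longrightarrow>
   adv (z @ concat (map atomw xs)) \<ge> adv z + length xs"
proof (induction xs arbitrary: z)
  case Nil
  then show ?case by simp
next
  case (Cons x xs)
  have sx: "strict x" using Cons.prems by simp
  have e: "z @ concat (map atomw (x # xs)) = (z @ atomw x) @ concat (map atomw xs)" by simp
  have "adv ((z @ atomw x) @ concat (map atomw xs)) \<ge> adv (z @ atomw x) + length xs"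
    apply (rule Cons.IH)
    using Cons.prems atomw_nonempty[OF sx] atomw_last[OF sx] by auto
  moreover have "adv (z @ atomw x) = adv z + 1"
    using adv_append[of z "atomw x"] Cons.prems atomw_nonempty[OF sx] atomw_hd[OF sx] by simp
  ultimately show ?case using e by simp
qed

lemma count_atomw:
  "length (filter ((=) A1) (atomw (s,k,t))) = s"
  "length (filter ((=) Bs) (atomw (s,k,t))) = k"
  "length (filter ((=) A2) (atomw (s,k,t))) = t"
  by (auto simp: atomw_def filter_replicate)

lemma atomw_inj: "atomw x = atomw y \<Longrightarrow> x = y"
  apply (cases x, cases y)
  by (metis count_atomw)

lemma atoms_unique:
  "(\<forall>x\<in>set xs. strict x) \<Longrightarrow> concat (map atomw xs) = concat (map atomw ys) \<Longrightarrow>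
   length ys \<le> length xs \<Longrightarrow> ys = xs"
proof (induction xs arbitrary: ys)
  case Nil
  then show ?case by simp
next
  case (Cons x xs)
  have sx: "strict x" using Cons.prems by simp
  show ?case
  proof (cases ys)
    case Nil
    then show ?thesis using Cons.prems atomw_nonempty[OF sx] by simp
  next
    case (Cons y ys')
    have eq: "atomw x @ concat (map atomw xs) = atomw y @ concat (map atomw ys')"
      using Cons.prems \<open>ys = y # ys'\<close> by simp
    then obtain us where us0: "(atomw x = atomw y @ us \<and> us @ concat (map atomw xs) = concat (map atomw ys'))
       \<or> (atomw x @ us = atomw y \<and> concat (map atomw xs) = us @ concat (map atomw ys'))"
      unfolding append_eq_append_conv2 by blast
    then have us: "(atomw x = atomw y @ us \<and> concat (map atomw ys') = us @ concat (map atomw xs))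
       \<or> (atomw x @ us = atomw y \<and> concat (map atomw xs) = us @ concat (map atomw ys'))"
      by auto
    show ?thesis
    proof (cases "us = []")
      case True
      then have "atomw x = atomw y" "concat (map atomw xs) = concat (map atomw ys')" using us by auto
      then show ?thesis using Cons.IH[of ys'] Cons.prems \<open>ys = y # ys'\<close> atomw_inj by auto
    next
      case False
      from us show ?thesis
      proof
        assume h: "atomw x = atomw y @ us \<and> concat (map atomw ys') = us @ concat (map atomw xs)"
        have lu: "last us = A2" using h atomw_last[OF sx] False by (metis last_appendR)
        have "adv (us @ concat (map atomw xs)) \<ge> adv us + length xs"
          using adv_concat_ge[OF False lu] Cons.prems by simp
        moreover have "ys' \<noteq> []" using h False by auto
        moreover have "adv (concat (map atomw ys')) \<le> length ys' - 1" by (rule adv_concat_atoms_le)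
        moreover have "length ys' \<le> length xs" using Cons.prems \<open>ys = y # ys'\<close> by simp
        ultimately have False using h by (cases ys') auto
        then show ?thesis ..
      next
        assume h: "atomw x @ us = atomw y \<and> concat (map atomw xs) = us @ concat (map atomw ys')"
        then have "xs \<noteq> []" using False by auto
        then obtain x' xs' where xs: "xs = x' # xs'" by (cases xs) auto
        have sx': "strict x'" using Cons.prems xs by simp
        have "hd us = A1" using h xs atomw_hd[OF sx'] atomw_nonempty[OF sx'] False
          by (metis concat.simps(2) hd_append2 list.simps(9))
        then have "adv (atomw x @ us) \<ge> 1"
          using adv_append[of "atomw x" us] False atomw_nonempty[OF sx] atomw_last[OF sx] by simp
        then show ?thesis using h by simp
      qed
    qed
  qed
qed



definition fac :: "nat \<Rightarrow> sym list" where "fac p = [A1] @ replicate p Bs @ [A2]"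
definition alt :: "nat list \<Rightarrow> sym list" where "alt ps = concat (map fac ps)"

lemma alt_Nil[simp]: "alt [] = []" by (simp add: alt_def)
lemma alt_Cons[simp]: "alt (p # ps) = fac p @ alt ps" by (simp add: alt_def)
lemma alt_append[simp]: "alt (xs @ ys) = alt xs @ alt ys" by (simp add: alt_def)
lemma fac_atom: "fac p = atomw (1,p,1)" by (simp add: fac_def atomw_def)
lemma alt_atoms: "alt ps = concat (map atomw (map (\<lambda>p. (1,p,1)) ps))"
  by (induction ps) (simp_all add: fac_atom)

lemma alt_eq_Nil[simp]: "alt ps = [] \<longleftrightarrow> ps = []"
  by (cases ps) (auto simp: fac_def)

lemma alt_hd: "ps \<noteq> [] \<Longrightarrow> hd (alt ps) = A1"
  by (cases ps) (auto simp: fac_def)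

lemma alt_Cons_eq: "alt ps = a # zs \<Longrightarrow> a = A1"
  by (metis alt_eq_Nil alt_hd list.distinct(1) list.sel(1))

lemma prefix_rep_A2:
  "Xp @ us = replicate p Bs @ [A2] \<Longrightarrow>
   (\<exists>j\<le>p. Xp = replicate j Bs \<and> us = replicate (p-j) Bs @ [A2]) \<or> (Xp = replicate p Bs @ [A2] \<and> us = [])"
proof (induction p arbitrary: Xp)
  case 0
  then show ?case by (cases Xp) auto
next
  case (Suc p)
  show ?case
  proof (cases Xp)
    case Nil
    then show ?thesis using Suc.prems by auto
  next
    case (Cons x Xp')
    then have "x = Bs" "Xp' @ us = replicate p Bs @ [A2]" using Suc.prems by auto
    from Suc.IH[OF this(2)] show ?thesis
    proof
      assume "\<exists>j\<le>p. Xp' = replicate j Bs \<and> us = replicate (p - j) Bs @ [A2]"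
      then obtain j where "j \<le> p" "Xp' = replicate j Bs" "us = replicate (p - j) Bs @ [A2]" by blast
      then show ?thesis using Cons \<open>x = Bs\<close>
        by (intro disjI1 exI[of _ "Suc j"]) auto
    next
      assume "Xp' = replicate p Bs @ [A2] \<and> us = []"
      then show ?thesis using Cons \<open>x = Bs\<close> by auto
    qed
  qed
qed

lemma prefix_fac:
  "Xp @ us = fac p \<Longrightarrow> Xp = [] \<or> (\<exists>j\<le>p. Xp = A1 # replicate j Bs \<and> us = replicate (p-j) Bs @ [A2])
     \<or> (Xp = fac p \<and> us = [])"
proof (cases Xp)
  case Nil
  then show ?thesis by simp
next
  case (Cons x Xp')
  assume h: "Xp @ us = fac p"
  then have "x = A1" "Xp' @ us = replicate p Bs @ [A2]" using Cons by (auto simp: fac_def)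
  from prefix_rep_A2[OF this(2)] show ?thesis using Cons \<open>x = A1\<close> by (auto simp: fac_def)
qed

lemma alt_split:
  "alt ps = Xp @ Yp \<Longrightarrow>
   (\<exists>xs ys. ps = xs @ ys \<and> Xp = alt xs \<and> Yp = alt ys) \<or>
   (\<exists>xs q ys j. ps = xs @ q # ys \<and> j \<le> q \<and> Xp = alt xs @ A1 # replicate j Bs \<and>
       Yp = replicate (q - j) Bs @ A2 # alt ys)"
proof (induction ps arbitrary: Xp)
  case Nil
  then show ?case by auto
next
  case (Cons p ps)
  then have "fac p @ alt ps = Xp @ Yp" by simp
  then obtain us where us: "(fac p = Xp @ us \<and> us @ alt ps = Yp) \<or> (fac p @ us = Xp \<and> alt ps = us @ Yp)"
    unfolding append_eq_append_conv2 by blast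
  then show ?case
  proof
    assume h: "fac p = Xp @ us \<and> us @ alt ps = Yp"
    then have "Xp @ us = fac p" by simp
    from prefix_fac[OF this] show ?thesis
    proof (elim disjE)
      assume "Xp = []"
      then show ?thesis using h by (intro disjI1 exI[of _ "[]"] exI[of _ "p # ps"]) auto
    next
      assume "\<exists>j\<le>p. Xp = A1 # replicate j Bs \<and> us = replicate (p - j) Bs @ [A2]"
      then obtain j where "j \<le> p" "Xp = A1 # replicate j Bs" "us = replicate (p - j) Bs @ [A2]" by blast
      then show ?thesis using h
        by (intro disjI2 exI[of _ "[]"] exI[of _ p] exI[of _ ps] exI[of _ j]) auto
    next
      assume "Xp = fac p \<and> us = []"
      then show ?thesis using h by (intro disjI1 exI[of _ "[p]"] exI[of _ ps]) auto
    qed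
  next
    assume h: "fac p @ us = Xp \<and> alt ps = us @ Yp"
    from Cons.IH[OF conjunct2[OF h]] show ?thesis
    proof (elim disjE exE conjE)
      fix xs ys assume "ps = xs @ ys" "us = alt xs" "Yp = alt ys"
      then show ?thesis using h by (intro disjI1 exI[of _ "p # xs"] exI[of _ ys]) auto
    next
      fix xs q ys j assume "ps = xs @ q # ys" "j \<le> q" "us = alt xs @ A1 # replicate j Bs"
        "Yp = replicate (q - j) Bs @ A2 # alt ys"
      then show ?thesis using h
        by (intro disjI2 exI[of _ "p # xs"] exI[of _ q] exI[of _ ys] exI[of _ j]) auto
    qed
  qed
qed

lemma rep_prefix_le:
  "replicate j c @ x = replicate q c @ y \<Longrightarrow> (y = [] \<or> hd y \<noteq> c) \<Longrightarrow> j \<le> q"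
proof (induction j arbitrary: q)
  case 0
  then show ?case by simp
next
  case (Suc j)
  then show ?case by (cases q) auto
qed

lemma rep_eq:
  "replicate j c @ x = replicate q c @ y \<Longrightarrow> (x = [] \<or> hd x \<noteq> c) \<Longrightarrow> (y = [] \<or> hd y \<noteq> c)
   \<Longrightarrow> j = q \<and> x = y"
proof (induction j arbitrary: q)
  case 0
  then show ?case by (cases q) auto
next
  case (Suc j)
  then show ?case by (cases q) auto
qed

lemma alt_fac:
  assumes "alt ps = Xp @ fac n @ Yp"
  shows "\<exists>xs ys. ps = xs @ n # ys \<and> Xp = alt xs \<and> Yp = alt ys"
proof -
  from alt_split[OF assms] show ?thesis
  proof (elim disjE exE conjE)
    fix xs ys assume h: "ps = xs @ ys" "Xp = alt xs" "fac n @ Yp = alt ys"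
    then obtain q ys' where ys: "ys = q # ys'" by (cases ys) (auto simp: fac_def)
    then have "replicate n Bs @ A2 # Yp = replicate q Bs @ A2 # alt ys'" using h by (simp add: fac_def)
    from rep_eq[OF this] have "n = q" "Yp = alt ys'" by auto
    then show ?thesis using h ys by auto
  next
    fix xs q ys j assume "fac n @ Yp = replicate (q - j) Bs @ A2 # alt ys"
    then show ?thesis by (cases "q - j") (auto simp: fac_def)
  qed
qed

lemma atom_vs:
  assumes "replicate a A1 @ replicate j Bs @ replicate c A2 @ Yp = replicate r Bs @ A2 # alt ys"
  shows "a = 0 \<and> j \<le> r \<and> c \<le> 1"
proof -
  have a0: "a = 0"
  proof (rule ccontr)
    assume "a \<noteq> 0"
    then show False using assms by (cases a; cases r) auto
  qed
  then have e: "replicate j Bs @ (replicate c A2 @ Yp) = replicate r Bs @ (A2 # alt ys)" using assms by simp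
  have jr: "j \<le> r" by (rule rep_prefix_le[OF e]) simp
  have "c \<le> 1"
  proof (rule ccontr)
    assume "\<not> c \<le> 1"
    then obtain c' where c: "c = Suc (Suc c')" by (cases c; cases "c - 1") auto
    then have "replicate c A2 @ Yp = A2 # A2 # replicate c' A2 @ Yp" by simp
    with rep_eq[OF e] have "alt ys = A2 # replicate c' A2 @ Yp" by auto
    then have "A2 = A1" by (rule alt_Cons_eq)
    then show False by simp
  qed
  then show ?thesis using a0 jr by simp
qed

lemma alt_infix:
  assumes "alt ps = Xp @ atomw (a,j,c) @ Yp" "\<forall>p\<in>set ps. p \<le> n"
  shows "a \<le> 1 \<and> c \<le> 1 \<and> j \<le> n"
proof -
  have e: "alt ps = Xp @ (replicate a A1 @ replicate j Bs @ replicate c A2 @ Yp)"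
    using assms(1) by (simp add: atomw_def)
  from alt_split[OF e] show ?thesis
  proof (elim disjE exE conjE)
    fix xs ys assume h: "ps = xs @ ys" "Xp = alt xs" "replicate a A1 @ replicate j Bs @ replicate c A2 @ Yp = alt ys"
    show ?thesis
    proof (cases ys)
      case Nil
      then show ?thesis using h by simp
    next
      case (Cons q ys')
      have qn: "q \<le> n" using assms(2) h Cons by simp
      show ?thesis
      proof (cases a)
        case 0
        then show ?thesis using h Cons by (cases j; cases c) (auto simp: fac_def)
      next
        case (Suc a')
        then have "replicate a' A1 @ replicate j Bs @ replicate c A2 @ Yp = replicate q Bs @ A2 # alt ys'"
          using h Cons by (simp add: fac_def)
        from atom_vs[OF this] show ?thesis using Suc qn by simp
      qed
    qed
  next
    fix xs q ys i assume h: "ps = xs @ q # ys" "i \<le> q"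
      "replicate a A1 @ replicate j Bs @ replicate c A2 @ Yp = replicate (q - i) Bs @ A2 # alt ys"
    have qn: "q \<le> n" using assms(2) h by simp
    from atom_vs[OF h(3)] show ?thesis using qn by arith
  qed
qed

lemma alt_21:
  assumes "alt ps = Xp @ [A2, A1] @ replicate n Bs @ Yp" "\<forall>p\<in>set ps. p \<le> n"
  shows "\<exists>Yp'. Yp = A2 # Yp'"
proof -
  have e: "alt ps = (Xp @ [A2]) @ (A1 # replicate n Bs @ Yp)" using assms(1) by simp
  from alt_split[OF e] show ?thesis
  proof (elim disjE exE conjE)
    fix xs ys assume h: "ps = xs @ ys" "A1 # replicate n Bs @ Yp = alt ys"
    then obtain q ys' where ys: "ys = q # ys'" by (cases ys) auto
    then have e2: "replicate n Bs @ Yp = replicate q Bs @ A2 # alt ys'" using h by (simp add: fac_def)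
    have "n \<le> q" by (rule rep_prefix_le[OF e2]) simp
    moreover have "q \<le> n" using assms(2) h ys by simp
    ultimately have "n = q" by simp
    then show ?thesis using e2 by auto
  next
    fix xs q ys j assume "A1 # replicate n Bs @ Yp = replicate (q - j) Bs @ A2 # alt ys"
    then show ?thesis by (cases "q - j") auto
  qed
qed

lemma alt_12:
  assumes "alt ps = Xp @ replicate n Bs @ [A2, A1] @ Yp" "\<forall>p\<in>set ps. p \<le> n" "0 < n"
  shows "\<exists>Xp'. Xp = Xp' @ [A1]"
proof -
  have e: "alt ps = Xp @ (replicate n Bs @ A2 # A1 # Yp)" using assms(1) by simp
  from alt_split[OF e] show ?thesis
  proof (elim disjE exE conjE)
    fix xs ys assume h: "replicate n Bs @ A2 # A1 # Yp = alt ys"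
    obtain n' where "n = Suc n'" using assms(3) by (cases n) auto
    then have "alt ys = Bs # replicate n' Bs @ A2 # A1 # Yp" using h by simp
    then have "Bs = A1" by (rule alt_Cons_eq)
    then show ?thesis by simp
  next
    fix xs q ys j assume h: "ps = xs @ q # ys" "j \<le> q" "Xp = alt xs @ A1 # replicate j Bs"
      "replicate n Bs @ A2 # A1 # Yp = replicate (q - j) Bs @ A2 # alt ys"
    from rep_eq[OF h(4)] have "n = q - j" by simp
    moreover have "q \<le> n" using assms(2) h by simp
    ultimately have "j = 0" using assms(3) by simp
    then show ?thesis using h by simp
  qed
qed



lemma pw_U_atoms: "pw (U c) N = concat (map atomw (replicate N (2,c,2)))"
  by (simp add: pw_def U_atom map_replicate)

lemma strict_concat_adv:
  "(\<forall>x\<in>set xs. strict x) \<Longrightarrow> xs \<noteq> [] \<Longrightarrow> adv (concat (map atomw xs)) = length xs - 1"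
proof -
  assume s: "\<forall>x\<in>set xs. strict x" and ne: "xs \<noteq> []"
  then obtain x xs' where xs: "xs = x # xs'" by (cases xs) auto
  have sx: "strict x" using s xs by simp
  have "adv (atomw x @ concat (map atomw xs')) \<ge> adv (atomw x) + length xs'"
    by (rule adv_concat_ge) (use s xs atomw_nonempty[OF sx] atomw_last[OF sx] in auto)
  then have "adv (concat (map atomw xs)) \<ge> length xs - 1" using xs by simp
  moreover have "adv (concat (map atomw xs)) \<le> length xs - 1" by (rule adv_concat_atoms_le)
  ultimately show ?thesis by simp
qed

lemma cmp_cmp: "bnd c y \<Longrightarrow> cmp c (cmp c y) = y"
  by (cases y) auto

lemma D_step:
  assumes "pw (U n) (length ps) \<in> shuffles (alt ps) R"
  shows "(\<forall>p\<in>set ps. p \<le> n) \<and> R = alt (map (\<lambda>p. n - p) ps)"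
proof -
  obtain ys where ys: "length ys = length ps" "alt ps = concat (map atomw ys)"
     "R = concat (map (atomw \<circ> cmp n) ys)" "\<forall>y\<in>set ys. bnd n y"
    using pw_atoms[OF assms] by blast
  have "ys = map (\<lambda>p. (1,p,1)) ps"
    by (rule atoms_unique) (use ys alt_atoms in auto)
  then show ?thesis using ys by (auto simp: alt_atoms comp_def)
qed

lemma atomw_SucR: "atomw (s,k,Suc t) = atomw (s,k,t) @ [A2]"
  by (simp add: atomw_def replicate_append_same)
lemma atomw_SucL: "atomw (Suc s,k,t) = A1 # atomw (s,k,t)"
  by (simp add: atomw_def)

lemma infix_atoms:
  assumes "alt ps = Pa @ concat (map atomw ys) @ Pb" "\<forall>p\<in>set ps. p \<le> n" "y \<in> set ys"
  shows "\<exists>a j c. y = (a,j,c) \<and> a \<le> 1 \<and> c \<le> 1 \<and> j \<le> n"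
proof -
  obtain l1 l2 where l: "ys = l1 @ y # l2" using split_list[OF assms(3)] by blast
  obtain a j c where y: "y = (a,j,c)" by (cases y) auto
  have e: "alt ps = (Pa @ concat (map atomw l1)) @ atomw (a,j,c) @ (concat (map atomw l2) @ Pb)"
    using assms(1) l y by simp
  from alt_infix[OF e assms(2)] show ?thesis using y by auto
qed

lemma EF_step:
  assumes nB: "n < B" and n0: "0 < n" and pn: "\<forall>p\<in>set ps. p \<le> n" and lp: "length ps = Suc r"
    and hE: "pw (U B) r @ fac n @ pw (U B) r \<in> shuffles (alt ps) R"
    and hF: "pw (U B) (2*r) \<in> shuffles R S"
  shows "\<exists>xs ys. ps = xs @ n # ys \<and> S = alt (xs @ ys)"
proof -
  obtain P1 P23 R1 R23 where s1: "alt ps = P1 @ P23" "R = R1 @ R23" "pw (U B) r \<in> shuffles P1 R1"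
     "fac n @ pw (U B) r \<in> shuffles P23 R23"
    using shuffles_append_split[OF hE refl] by metis
  obtain P2 P3 R2 R3 where s2: "P23 = P2 @ P3" "R23 = R2 @ R3" "fac n \<in> shuffles P2 R2"
     "pw (U B) r \<in> shuffles P3 R3"
    using shuffles_append_split[OF s1(4) refl] by metis
  obtain ys1 where y1: "length ys1 = r" "P1 = concat (map atomw ys1)"
     "R1 = concat (map (atomw \<circ> cmp B) ys1)" "\<forall>y\<in>set ys1. bnd B y"
    using pw_atoms[OF s1(3)] by blast
  obtain ys3 where y3: "length ys3 = r" "P3 = concat (map atomw ys3)"
     "R3 = concat (map (atomw \<circ> cmp B) ys3)" "\<forall>y\<in>set ys3. bnd B y"
    using pw_atoms[OF s2(4)] by blast
  have "replicate 1 A1 @ replicate n Bs @ replicate 1 A2 \<in> shuffles P2 R2"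
    using s2(3) by (simp add: fac_def)
  then obtain s k t where c2: "s \<le> 1" "k \<le> n" "t \<le> 1" "P2 = atomw (s,k,t)"
     "R2 = atomw (1-s, n-k, 1-t)"
    using atom_shuffle by blast
  have altps: "alt ps = P1 @ P2 @ P3" using s1 s2 by simp
  have inf1: "\<exists>a j c. y = (a,j,c) \<and> a \<le> 1 \<and> c \<le> 1 \<and> j \<le> n" if "y \<in> set ys1" for y
    by (rule infix_atoms[of ps "[]" ys1 "P2 @ P3"]) (use altps y1 pn that in auto)
  have inf3: "\<exists>a j c. y = (a,j,c) \<and> a \<le> 1 \<and> c \<le> 1 \<and> j \<le> n" if "y \<in> set ys3" for y
    by (rule infix_atoms[of ps "P1 @ P2" ys3 "[]"]) (use altps y3 pn that in auto)
  define zs1 where "zs1 = map (cmp B) ys1"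
  define zs3 where "zs3 = map (cmp B) ys3"
  have st1: "\<forall>z\<in>set zs1. strict z" using inf1 unfolding zs1_def by fastforce
  have st3: "\<forall>z\<in>set zs3. strict z" using inf3 unfolding zs3_def by fastforce
  have R1z: "R1 = concat (map atomw zs1)" using y1 by (simp add: zs1_def comp_def)
  have R3z: "R3 = concat (map atomw zs3)" using y3 by (simp add: zs3_def comp_def)
  have P1z: "P1 = concat (map (atomw \<circ> cmp B) zs1)"
    using y1 by (simp add: zs1_def comp_def cmp_cmp cong: map_cong)
  have P3z: "P3 = concat (map (atomw \<circ> cmp B) zs3)"
    using y3 by (simp add: zs3_def comp_def cmp_cmp cong: map_cong)
  have lz1: "length zs1 = r" and lz3: "length zs3 = r" using y1 y3 by (auto simp: zs1_def zs3_def)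
  have RR: "R = R1 @ R2 @ R3" using s1 s2 by simp
  show ?thesis
  proof (cases r)
    case 0
    then have "R = []" using hF by simp
    then have "R2 = []" using RR by simp
    then have "s = 1" "k = n" "t = 1" using c2 by (auto simp: atomw_def)
    then have "P2 = fac n" using c2 by (simp add: fac_atom)
    moreover have "P1 = []" "P3 = []" using y1 y3 0 by auto
    ultimately have "alt ps = [] @ fac n @ []" using altps by simp
    from alt_fac[OF this] obtain xs ys where h0: "ps = xs @ n # ys" "[] = alt xs" "[] = alt ys" by blast
    have "xs = []" "ys = []" using h0(2,3) alt_eq_Nil by metis+
    moreover have "S = []" using hF 0 by simp
    ultimately show ?thesis using h0 by auto
  next
    case (Suc r')
    have zs1ne: "zs1 \<noteq> []" and zs3ne: "zs3 \<noteq> []" using lz1 lz3 Suc by auto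
    obtain zs1' z1 where zs1: "zs1 = zs1' @ [z1]"
      using append_butlast_last_id[OF zs1ne, symmetric] by blast
    obtain z3 zs3' where zs3: "zs3 = z3 # zs3'" using lz3 Suc by (cases zs3) auto
    have sz1: "strict z1" and sz3: "strict z3" using st1 st3 zs1 zs3 by auto
    have R1ne: "R1 \<noteq> []" and R1l: "last R1 = A2"
      using R1z zs1 atomw_nonempty[OF sz1] atomw_last[OF sz1] by auto
    have R3ne: "R3 \<noteq> []" and R3h: "hd R3 = A1"
      using R3z zs3 atomw_nonempty[OF sz3] atomw_hd[OF sz3] by auto
    have a1: "adv R1 = r - 1" using strict_concat_adv[OF st1 zs1ne] R1z lz1 by simp
    have a3: "adv R3 = r - 1" using strict_concat_adv[OF st3 zs3ne] R3z lz3 by simp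
    have "adv R \<le> adv (pw (U B) (2*r))" by (rule adv_shuffles[OF hF])
    also have "\<dots> \<le> length (replicate (2*r) (2::nat,B,2::nat)) - 1"
      unfolding pw_U_atoms by (rule adv_concat_atoms_le)
    also have "\<dots> = 2*r - 1" by simp
    finally have aR: "adv R \<le> 2*r - 1" .
    have aR2: "adv R2 = 0" using c2 by simp
    define j1 where "j1 = (if rk (hd (R2 @ R3)) < rk A2 then 1 else 0 :: nat)"
    define j2 where "j2 = (if R2 \<noteq> [] \<and> rk A1 < rk (last R2) then 1 else 0 :: nat)"
    have "adv R = adv R1 + adv R3 + j1 + j2"
      unfolding RR adv_append[of R1 "R2 @ R3"] adv_append[of R2 R3] j1_def j2_def
      using R1ne R1l R3ne R3h aR2 by simp
    then have jj: "j1 + j2 \<le> 1" using aR a1 a3 Suc by simp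
    have key: "k = n \<and> (s = 1 \<or> t = 1)"
    proof (rule ccontr)
      assume nk: "\<not> (k = n \<and> (s = 1 \<or> t = 1))"
      have "j1 = 1 \<and> j2 = 1"
      proof (cases "k = n")
        case True
        then have "s = 0" "t = 0" using nk c2 by auto
        then show ?thesis using c2 True R3ne R3h
          unfolding j1_def j2_def by (simp add: atomw_def)
      next
        case False
        then obtain k' where k': "n - k = Suc k'" using c2 by (cases "n - k") auto
        have "s = 0 \<or> s = 1" "t = 0 \<or> t = 1" using c2 by auto
        then show ?thesis using c2 k' unfolding j1_def j2_def
          by (auto simp: atomw_def hd_append last_append)
      qed
      then show False using jj by simp
    qed
    then have kn: "k = n" by simp
    from key consider (a) "s = 1" "t = 1" | (b) "s = 1" "t = 0" | (c) "s = 0" "t = 1"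
      using c2 by force
    then show ?thesis
    proof cases
      case a
      then have "R2 = []" "P2 = fac n" using c2 kn by (auto simp: atomw_def fac_atom)
      then have Req: "R = concat (map atomw (zs1 @ zs3))" using RR R1z R3z by simp
      obtain gs where g: "length gs = 2*r" "R = concat (map atomw gs)"
         "S = concat (map (atomw \<circ> cmp B) gs)" "\<forall>y\<in>set gs. bnd B y"
        using pw_atoms[OF hF] by blast
      have "gs = zs1 @ zs3"
        by (rule atoms_unique) (use st1 st3 Req g lz1 lz3 in auto)
      then have Seq: "S = P1 @ P3" using g P1z P3z by simp
      have "alt ps = P1 @ fac n @ P3" using altps \<open>P2 = fac n\<close> by simp
      from alt_fac[OF this] obtain xs ys where "ps = xs @ n # ys" "P1 = alt xs" "P3 = alt ys" by blast
      then show ?thesis using Seq by auto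
    next
      case b
      then have R2e: "R2 = [A2]" and P2e: "P2 = A1 # replicate n Bs"
        using c2 kn by (auto simp: atomw_def)
      obtain a j c where z1e: "z1 = (a,j,c)" by (cases z1) auto
      define gs where "gs = zs1' @ [(a,j,Suc c)] @ zs3"
      have stg: "\<forall>z\<in>set gs. strict z" using st1 st3 zs1 z1e unfolding gs_def by auto
      have Req: "R = concat (map atomw gs)"
        using RR R1z R3z zs1 z1e R2e unfolding gs_def by (simp add: atomw_SucR)
      obtain hs where g: "length hs = 2*r" "R = concat (map atomw hs)"
         "S = concat (map (atomw \<circ> cmp B) hs)" "\<forall>y\<in>set hs. bnd B y"
        using pw_atoms[OF hF] by blast
      have "hs = gs"
        by (rule atoms_unique) (use stg Req g lz1 lz3 zs1 in \<open>auto simp: gs_def\<close>)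
      then have bc: "Suc c \<le> 2" using g(4) unfolding gs_def by auto
      define Q where "Q = concat (map (atomw \<circ> cmp B) zs1') @ atomw (cmp B (a,j,Suc c))"
      have cq: "atomw (cmp B (a,j,c)) = atomw (cmp B (a,j,Suc c)) @ [A2]"
        using bc by (cases c) (auto simp: atomw_SucR numeral_2_eq_2)
      have P1q: "P1 = Q @ [A2]" using P1z zs1 z1e cq unfolding Q_def by simp
      have Sq: "S = Q @ P3" using g \<open>hs = gs\<close> P3z unfolding gs_def Q_def by simp
      have "alt ps = Q @ [A2, A1] @ replicate n Bs @ P3" using altps P1q P2e by simp
      from alt_21[OF this pn] obtain P3' where P3': "P3 = A2 # P3'" by blast
      have "alt ps = (Q @ [A2]) @ fac n @ P3'" using altps P1q P2e P3' by (simp add: fac_def)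
      from alt_fac[OF this] obtain xs ys where "ps = xs @ n # ys" "Q @ [A2] = alt xs" "P3' = alt ys"
        by blast
      then show ?thesis using Sq P3' by (intro exI[of _ xs] exI[of _ ys]) auto
    next
      case c
      then have R2e: "R2 = [A1]" and P2e: "P2 = replicate n Bs @ [A2]"
        using c2 kn by (auto simp: atomw_def)
      obtain a j cc where z3e: "z3 = (a,j,cc)" by (cases z3) auto
      define gs where "gs = zs1 @ [(Suc a,j,cc)] @ zs3'"
      have stg: "\<forall>z\<in>set gs. strict z" using st1 st3 zs3 z3e unfolding gs_def by auto
      have Req: "R = concat (map atomw gs)"
        using RR R1z R3z zs3 z3e R2e unfolding gs_def by (simp add: atomw_SucL)
      obtain hs where g: "length hs = 2*r" "R = concat (map atomw hs)"
         "S = concat (map (atomw \<circ> cmp B) hs)" "\<forall>y\<in>set hs. bnd B y"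
        using pw_atoms[OF hF] by blast
      have "hs = gs"
        by (rule atoms_unique) (use stg Req g lz1 lz3 zs3 in \<open>auto simp: gs_def\<close>)
      then have bc: "Suc a \<le> 2" using g(4) unfolding gs_def by auto
      define Q where "Q = atomw (cmp B (Suc a,j,cc)) @ concat (map (atomw \<circ> cmp B) zs3')"
      have cq: "atomw (cmp B (a,j,cc)) = A1 # atomw (cmp B (Suc a,j,cc))"
        using bc by (cases a) (auto simp: atomw_SucL numeral_2_eq_2)
      have P3q: "P3 = A1 # Q" using P3z zs3 z3e cq unfolding Q_def by simp
      have Sq: "S = P1 @ Q" using g \<open>hs = gs\<close> P1z unfolding gs_def Q_def by simp
      have "alt ps = P1 @ replicate n Bs @ [A2, A1] @ Q" using altps P3q P2e by simp
      from alt_12[OF this pn n0] obtain P1' where P1': "P1 = P1' @ [A1]" by blast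
      have "alt ps = P1' @ fac n @ (A1 # Q)" using altps P1' P2e P3q by (simp add: fac_def)
      from alt_fac[OF this] obtain xs ys where "ps = xs @ n # ys" "P1' = alt xs" "A1 # Q = alt ys"
        by blast
      then show ?thesis using Sq P1' by (intro exI[of _ xs] exI[of _ ys]) auto
    qed
  qed
qed



inductive reach :: "sym list \<Rightarrow> (sym \<times> nat option) list \<Rightarrow> nat \<Rightarrow> (sym \<times> nat option) list \<Rightarrow> nat
   \<Rightarrow> (nat option \<times> nat) set \<Rightarrow> bool" for w :: "sym list" where
  rrefl: "reach w Q i Q i {}"
| rpush: "i < length w \<Longrightarrow> reach w (Q @ [(w ! i, Some i)]) (Suc i) Q' j M \<Longrightarrow> reach w Q i Q' j M"
| rpop: "i < length w \<Longrightarrow> reach w Q (Suc i) Q' j M \<Longrightarrow> reach w ((w ! i, t) # Q) i Q' j (insert (t, i) M)"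

definition tg :: "sym list \<Rightarrow> nat \<Rightarrow> sym \<times> nat option" where "tg w p = (w ! p, Some p)"

lemma qrun_split:
  "qrun w Q i M \<Longrightarrow> i \<le> j \<Longrightarrow> j \<le> length w \<Longrightarrow>
   \<exists>Q' M1 M2. reach w Q i Q' j M1 \<and> qrun w Q' j M2 \<and> M = M1 \<union> M2"
proof (induction arbitrary: j rule: qrun.induct)
  case fin
  then show ?case by (intro exI[of _ "[]"] exI[of _ "{}"]) (auto intro: rrefl qrun.fin)
next
  case (push i Q M)
  show ?case
  proof (cases "j = i")
    case True
    then show ?thesis using qrun.push[OF push.hyps] by (intro exI[of _ Q] exI[of _ "{}"] exI[of _ M]) (auto intro: rrefl)
  next
    case False
    then obtain Q' M1 M2 where "reach w (Q @ [(w ! i, Some i)]) (Suc i) Q' j M1" "qrun w Q' j M2" "M = M1 \<union> M2"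
      using push.IH[of j] push.prems by auto
    then show ?thesis using rpush[OF push.hyps(1)] by blast
  qed
next
  case (pop i Q M t)
  show ?case
  proof (cases "j = i")
    case True
    then show ?thesis using qrun.pop[OF pop.hyps, of t]
      by (intro exI[of _ "(w ! i, t) # Q"] exI[of _ "{}"] exI[of _ "insert (t,i) M"]) (auto intro: rrefl)
  next
    case False
    then obtain Q' M1 M2 where "reach w Q (Suc i) Q' j M1" "qrun w Q' j M2" "M = M1 \<union> M2"
      using pop.IH[of j] pop.prems by auto
    then show ?thesis using rpop[OF pop.hyps(1)]
      by (intro exI[of _ Q'] exI[of _ "insert (t,i) M1"] exI[of _ M2]) auto
  qed
qed

lemma qrun_pos: "qrun w Q i M \<Longrightarrow> (t,q) \<in> M \<Longrightarrow> i \<le> q"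
  by (induction rule: qrun.induct) auto

lemma reach_le: "reach w Q i Q' j M \<Longrightarrow> i \<le> j \<and> (i < j \<longrightarrow> j \<le> length w)"
  by (induction rule: reach.induct) auto

lemma reach_pos: "reach w Q i Q' j M \<Longrightarrow> (t,q) \<in> M \<Longrightarrow> i \<le> q \<and> q < j"
proof (induction rule: reach.induct)
  case (rpop i Q Q' j M t')
  then show ?case using reach_le[OF rpop.hyps(2)] by auto
qed auto

lemma drop_take_Cons: "i < j \<Longrightarrow> j \<le> length w \<Longrightarrow> drop i (take j w) = w ! i # drop (Suc i) (take j w)"
proof -
  assume a: "i < j" "j \<le> length w"
  then have "i < length (take j w)" by simp
  then have "drop i (take j w) = take j w ! i # drop (Suc i) (take j w)" by (rule Cons_nth_drop_Suc[symmetric])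
  then show ?thesis using a by simp
qed

lemma reach_char:
  "reach w Q i Q' j M \<Longrightarrow> \<exists>d P. sorted_wrt (<) P \<and> set P \<subseteq> {i..<j} \<and>
     Q' = drop d (Q @ map (tg w) P) \<and> d + length P = j - i \<and> d \<le> length Q + length P \<and>
     drop i (take j w) \<in> shuffles (map fst (take d (Q @ map (tg w) P))) (map ((!) w) P)"
proof (induction rule: reach.induct)
  case (rrefl Q i)
  then show ?case by (intro exI[of _ 0] exI[of _ "[]"]) auto
next
  case (rpush i Q Q' j M)
  obtain d P where h: "sorted_wrt (<) P" "set P \<subseteq> {Suc i..<j}"
     "Q' = drop d ((Q @ [(w ! i, Some i)]) @ map (tg w) P)" "d + length P = j - Suc i"
     "d \<le> length (Q @ [(w ! i, Some i)]) + length P"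
     "drop (Suc i) (take j w) \<in> shuffles (map fst (take d ((Q @ [(w ! i, Some i)]) @ map (tg w) P))) (map ((!) w) P)"
    using rpush.IH by blast
  have ij: "Suc i \<le> j" "j \<le> length w" using reach_le[OF rpush.hyps(2)] rpush.hyps(1) by auto
  have dt: "drop i (take j w) = w ! i # drop (Suc i) (take j w)" using ij by (intro drop_take_Cons) auto
  have e: "Q @ map (tg w) (i # P) = (Q @ [(w ! i, Some i)]) @ map (tg w) P" by (simp add: tg_def)
  show ?case
  proof (rule exI[of _ d], rule exI[of _ "i # P"], intro conjI)
    show "sorted_wrt (<) (i # P)" using h(1,2) by auto
    show "set (i # P) \<subseteq> {i..<j}" using h(2) ij by auto
    show "Q' = drop d (Q @ map (tg w) (i # P))" using h(3) e by simp
    show "d + length (i # P) = j - i" using h(4) ij by simp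
    show "d \<le> length Q + length (i # P)" using h(5) by simp
    show "drop i (take j w) \<in> shuffles (map fst (take d (Q @ map (tg w) (i # P)))) (map ((!) w) (i # P))"
      unfolding dt e using h(6) by (simp add: Cons_in_shuffles_rightI)
  qed
next
  case (rpop i Q Q' j M t)
  obtain d P where h: "sorted_wrt (<) P" "set P \<subseteq> {Suc i..<j}"
     "Q' = drop d (Q @ map (tg w) P)" "d + length P = j - Suc i"
     "d \<le> length Q + length P"
     "drop (Suc i) (take j w) \<in> shuffles (map fst (take d (Q @ map (tg w) P))) (map ((!) w) P)"
    using rpop.IH by blast
  have ij: "Suc i \<le> j" "j \<le> length w" using reach_le[OF rpop.hyps(2)] rpop.hyps(1) by auto
  have dt: "drop i (take j w) = w ! i # drop (Suc i) (take j w)" using ij by (intro drop_take_Cons) auto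
  show ?case
  proof (rule exI[of _ "Suc d"], rule exI[of _ P], intro conjI)
    show "sorted_wrt (<) P" using h(1) by auto
    show "set P \<subseteq> {i..<j}" using h(2) ij by auto
    show "Q' = drop (Suc d) (((w ! i, t) # Q) @ map (tg w) P)" using h(3) by simp
    show "Suc d + length P = j - i" using h(4) ij by simp
    show "Suc d \<le> length ((w ! i, t) # Q) + length P" using h(5) by simp
    show "drop i (take j w) \<in> shuffles (map fst (take (Suc d) (((w ! i, t) # Q) @ map (tg w) P))) (map ((!) w) P)"
      unfolding dt using h(6) by (simp add: Cons_in_shuffles_leftI)
  qed
qed

lemma reach_pops:
  "reach w Q i Q' j M \<Longrightarrow> (\<forall>k<j-i. (tt k, i+k) \<in> M) \<Longrightarrow>
   j - i \<le> length Q \<and> (\<forall>k<j-i. snd (Q ! k) = tt k) \<and> Q' = drop (j-i) Q"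
proof (induction arbitrary: tt rule: reach.induct)
  case (rrefl Q i)
  then show ?case by simp
next
  case (rpush i Q Q' j M)
  have ij: "Suc i \<le> j" using reach_le[OF rpush.hyps(2)] by simp
  then have "0 < j - i" by simp
  then have "(tt 0, i + 0) \<in> M" using rpush.prems by blast
  then show ?case using reach_pos[OF rpush.hyps(2)] by fastforce
next
  case (rpop i Q Q' j M t)
  have ij: "Suc i \<le> j" using reach_le[OF rpop.hyps(2)] by simp
  have t0: "tt 0 = t"
  proof -
    have "0 < j - i" using ij by simp
    then have "(tt 0, i + 0) \<in> insert (t, i) M" using rpop.prems by blast
    then show ?thesis using reach_pos[OF rpop.hyps(2)] by fastforce
  qed
  have "\<forall>k<j - Suc i. (tt (Suc k), Suc i + k) \<in> M"
  proof (intro allI impI)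
    fix k assume "k < j - Suc i"
    then have "Suc k < j - i" by simp
    then have "(tt (Suc k), i + Suc k) \<in> insert (t, i) M" using rpop.prems by blast
    then show "(tt (Suc k), Suc i + k) \<in> M" by simp
  qed
  from rpop.IH[OF this] have ih: "j - Suc i \<le> length Q" "\<forall>k<j - Suc i. snd (Q ! k) = tt (Suc k)"
     "Q' = drop (j - Suc i) Q" by auto
  have "\<forall>k<j - i. snd (((w ! i, t) # Q) ! k) = tt k"
  proof (intro allI impI)
    fix k assume "k < j - i"
    then show "snd (((w ! i, t) # Q) ! k) = tt k" using ih t0 by (cases k) auto
  qed
  moreover have "j - i = Suc (j - Suc i)" using ij by simp
  ultimately show ?case using ih by simp
qed

definition tagsok :: "(sym \<times> nat option) list \<Rightarrow> nat \<Rightarrow> bool" where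
  "tagsok Q s \<longleftrightarrow> (\<forall>x\<in>set Q. snd x = None \<or> (\<exists>p. snd x = Some p \<and> p < s))"

lemma block_step:
  fixes w :: "sym list" and L :: nat and md :: "sym list"
  assumes qr: "qrun w Q s Mq" and tq: "tagsok Q s" and L0: "0 < L"
    and lenw: "s + L + length md + L \<le> length w"
    and md: "drop (s + L) (take (s + L + length md) w) = md"
    and pops: "\<forall>j<L. (Some (s + j), s + L + length md + j) \<in> Mq"
  shows "\<exists>Q'' M''. qrun w Q'' (s + L + length md + L) M'' \<and> M'' \<subseteq> Mq \<and>
     (\<forall>x\<in>Mq. s + L + length md + L \<le> snd x \<longrightarrow> x \<in> M'') \<and>
     tagsok Q'' (s + L + length md + L) \<and> md \<in> shuffles (map fst Q) (map fst Q'')"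
proof -
  define s1 where "s1 = s + L"
  define s2 where "s2 = s1 + length md"
  define s3 where "s3 = s2 + L"
  obtain Q1 MA MR1 where a: "reach w Q s Q1 s1 MA" "qrun w Q1 s1 MR1" "Mq = MA \<union> MR1"
    using qrun_split[OF qr, of s1] lenw unfolding s1_def by auto
  obtain Q2 MB MR2 where b: "reach w Q1 s1 Q2 s2 MB" "qrun w Q2 s2 MR2" "MR1 = MB \<union> MR2"
    using qrun_split[OF a(2), of s2] lenw unfolding s1_def s2_def by auto
  obtain Q3 MC MR3 where c: "reach w Q2 s2 Q3 s3 MC" "qrun w Q3 s3 MR3" "MR2 = MC \<union> MR3"
    using qrun_split[OF b(2), of s3] lenw unfolding s1_def s2_def s3_def by auto
  have popsC: "\<forall>k<s3 - s2. (Some (s + k), s2 + k) \<in> MC"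
  proof (intro allI impI)
    fix k assume k: "k < s3 - s2"
    then have "(Some (s + k), s2 + k) \<in> Mq" using pops unfolding s1_def s2_def s3_def by auto
    moreover have "(Some (s + k), s2 + k) \<notin> MA" using reach_pos[OF a(1)] unfolding s1_def s2_def by fastforce
    moreover have "(Some (s + k), s2 + k) \<notin> MB" using reach_pos[OF b(1)] by fastforce
    moreover have "(Some (s + k), s2 + k) \<notin> MR3" using qrun_pos[OF c(2)] k by fastforce
    ultimately show "(Some (s + k), s2 + k) \<in> MC" using a(3) b(3) c(3) by auto
  qed
  have L3: "s3 - s2 = L" unfolding s3_def by simp
  from reach_pops[OF c(1) popsC] have pc: "L \<le> length Q2" "\<forall>k<L. snd (Q2 ! k) = Some (s + k)"
     "Q3 = drop L Q2" unfolding L3 by auto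
  obtain dA PA where hA: "sorted_wrt (<) PA" "set PA \<subseteq> {s..<s1}" "Q1 = drop dA (Q @ map (tg w) PA)"
     "dA + length PA = s1 - s" "dA \<le> length Q + length PA"
    using reach_char[OF a(1)] by blast
  obtain dB PB where hB: "sorted_wrt (<) PB" "set PB \<subseteq> {s1..<s2}" "Q2 = drop dB (Q1 @ map (tg w) PB)"
     "dB + length PB = s2 - s1" "dB \<le> length Q1 + length PB"
     "drop s1 (take s2 w) \<in> shuffles (map fst (take dB (Q1 @ map (tg w) PB))) (map ((!) w) PB)"
    using reach_char[OF b(1)] by blast
  have lQ1: "length Q1 = length Q + length PA - dA" using hA by simp
  have n1: "Q2 ! k = (Q1 @ map (tg w) PB) ! (dB + k)" for k
    unfolding hB(3) by (rule nth_drop) (use hB(5) in simp)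
  have n2: "Q1 ! k = (Q @ map (tg w) PA) ! (dA + k)" for k
    unfolding hA(3) by (rule nth_drop) (use hA(5) in simp)
  have lQ2: "length Q2 = length Q1 + length PB - dB" using hB(3) by simp
  have up: "dB + L \<le> length Q1"
  proof (rule ccontr)
    assume nu: "\<not> dB + L \<le> length Q1"
    define j0 where "j0 = length Q1 - dB"
    have j0L: "j0 < L" using nu L0 unfolding j0_def by arith
    define idx where "idx = dB + j0 - length Q1"
    have ge: "length Q1 \<le> dB + j0" unfolding j0_def by arith
    have idxl: "idx < length PB" using pc(1) j0L lQ2 ge unfolding idx_def by arith
    have "Q2 ! j0 = (Q1 @ map (tg w) PB) ! (dB + j0)" by (rule n1)
    also have "\<dots> = map (tg w) PB ! idx" using ge unfolding idx_def by (simp add: nth_append)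
    also have "\<dots> = tg w (PB ! idx)" using idxl by simp
    finally have e: "Q2 ! j0 = tg w (PB ! idx)" .
    have "PB ! idx \<in> set PB" using idxl by simp
    then have "s1 \<le> PB ! idx" using hB(2) by auto
    moreover have "snd (Q2 ! j0) = Some (s + j0)" using pc(2) j0L by simp
    ultimately show False using e j0L unfolding tg_def s1_def by simp
  qed
  have low: "length Q \<le> dA + dB"
  proof (rule ccontr)
    assume nl: "\<not> length Q \<le> dA + dB"
    have "Q2 ! 0 = (Q1 @ map (tg w) PB) ! dB" using n1[of 0] by simp
    also have "\<dots> = Q1 ! dB" using up L0 by (simp add: nth_append)
    also have "\<dots> = (Q @ map (tg w) PA) ! (dA + dB)" by (rule n2)
    also have "\<dots> = Q ! (dA + dB)" using nl by (simp add: nth_append)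
    finally have "Q2 ! 0 = Q ! (dA + dB)" .
    moreover have "Q ! (dA + dB) \<in> set Q" using nl by simp
    moreover have "snd (Q2 ! 0) = Some s" using pc(2) L0 by auto
    ultimately show False using tq unfolding tagsok_def by fastforce
  qed
  have lPA: "dA + length PA = L" using hA(4) unfolding s1_def by simp
  have dA0: "dA = 0" and dBQ: "dB = length Q" using up low lQ1 lPA by auto
  have Q1e: "Q1 = Q @ map (tg w) PA" using hA(3) dA0 by simp
  have lPA': "length PA = L" using lPA dA0 by simp
  have Q3e: "Q3 = map (tg w) PB" using pc(3) hB(3) Q1e dBQ lPA' by simp
  have mdsh: "md \<in> shuffles (map fst Q) (map fst Q3)"
    using hB(6) md Q1e dBQ Q3e unfolding s1_def s2_def by (simp add: tg_def comp_def)
  have tags3: "tagsok Q3 s3" using Q3e hB(2) unfolding tagsok_def tg_def s3_def by auto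
  have sub: "MR3 \<subseteq> Mq" using a(3) b(3) c(3) by auto
  have keep: "\<forall>x\<in>Mq. s3 \<le> snd x \<longrightarrow> x \<in> MR3"
  proof (intro ballI impI)
    fix x assume x: "x \<in> Mq" "s3 \<le> snd x"
    obtain tt q where xq: "x = (tt, q)" by (cases x) auto
    have "x \<notin> MA" using reach_pos[OF a(1)] x xq unfolding s1_def s2_def s3_def by fastforce
    moreover have "x \<notin> MB" using reach_pos[OF b(1)] x xq unfolding s2_def s3_def by fastforce
    moreover have "x \<notin> MC" using reach_pos[OF c(1)] x xq by fastforce
    ultimately show "x \<in> MR3" using x a(3) b(3) c(3) by auto
  qed
  show ?thesis
    using c(2) sub keep tags3 mdsh unfolding s1_def s2_def s3_def by (intro exI[of _ Q3] exI[of _ MR3]) auto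
qed



lemma mid_4k:
  assumes "1 \<le> k"
  shows "mid ns m B (4*k-3) = Dw ns m k" "mid ns m B (4*k-2) = Dw ns m k"
        "mid ns m B (4*k-1) = Ew ns m B k" "mid ns m B (4*k) = Fw m B k"
proof -
  obtain k' where k: "k = Suc k'" using assms by (cases k) auto
  show "mid ns m B (4*k-3) = Dw ns m k" "mid ns m B (4*k-2) = Dw ns m k"
        "mid ns m B (4*k-1) = Ew ns m B k" "mid ns m B (4*k) = Fw m B k"
    unfolding mid_def Let_def k by (simp_all add: mod_Suc)
qed

lemma Ver_blk_aux:
  "concat (map (\<lambda>k.
       v (4*k-3) @ Dw ns m k @ v (4*k-3) @ v (4*k-2) @ Dw ns m k @ v (4*k-2) @
       v (4*k-1) @ Ew ns m B k @ v (4*k-1) @ v (4*k) @ Fw m B k @ v (4*k)) [1..<n+1])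
   = concat (map (blk ns m B) [1..<4*n+1])"
proof (induction n)
  case 0
  then show ?case by simp
next
  case (Suc n)
  have u1: "[1..<4 * Suc n + 1] = [1..<4*n+1] @ [4*n+1..<4*n+1+4]"
    using upt_add_eq_append[of 1 "4*n+1" 4] by simp
  have u2: "[4*n+1..<4*n+1+4] = [4*Suc n - 3, 4*Suc n - 2, 4*Suc n - 1, 4*Suc n]"
    by (simp add: upt_conv_Cons)
  have u: "[1..<4 * Suc n + 1] = [1..<4*n+1] @ [4*Suc n - 3, 4*Suc n - 2, 4*Suc n - 1, 4*Suc n]"
    using u1 u2 by simp
  show ?case
    unfolding u using Suc mid_4k[of "Suc n" ns m B] by (simp add: blk_def)
qed

lemma Ver_blk: "Ver ns m B = concat (map (blk ns m B) [1..<12*m+1])"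
  unfolding Ver_def using Ver_blk_aux[of ns m B "3*m"] by simp

lemma Ver_split:
  assumes "1 \<le> l" "l \<le> 12*m"
  shows "Ver ns m B = concat (map (blk ns m B) [1..<l]) @ blk ns m B l @ concat (map (blk ns m B) [Suc l..<12*m+1])"
proof -
  have "[1..<12*m+1] = [1..<l] @ [l..<12*m+1]"
    using upt_add_eq_append[of 1 l "12*m+1-l"] assms by simp
  moreover have "[l..<12*m+1] = l # [Suc l..<12*m+1]" using assms by (simp add: upt_conv_Cons)
  ultimately show ?thesis unfolding Ver_blk by simp
qed

lemma voff_Suc: "1 \<le> l \<Longrightarrow> voff ns m B (Suc l) = voff ns m B l + length (blk ns m B l)"
  unfolding voff_def by simp

definition st :: "nat list \<Rightarrow> nat \<Rightarrow> nat \<Rightarrow> (nat option \<times> nat) set \<Rightarrow> nat \<Rightarrow> (sym \<times> nat option) list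
   \<Rightarrow> (nat option \<times> nat) set \<Rightarrow> bool" where
  "st ns m B M l Q M' \<longleftrightarrow> qrun (Ver ns m B) Q (voff ns m B l) M' \<and> M' \<subseteq> M \<and>
     (\<forall>x\<in>M. voff ns m B l \<le> snd x \<longrightarrow> x \<in> M') \<and> tagsok Q (voff ns m B l)"

lemma ver_block:
  assumes V: "V_condition ns m B M" and S: "st ns m B M l Q M'" and l: "1 \<le> l" "l \<le> 12*m"
  shows "\<exists>Q'' M''. st ns m B M (Suc l) Q'' M'' \<and> mid ns m B l \<in> shuffles (map fst Q) (map fst Q'')"
proof -
  define w where "w = Ver ns m B"
  define pre where "pre = concat (map (blk ns m B) [1..<l])"
  define rest where "rest = concat (map (blk ns m B) [Suc l..<12*m+1])"
  define s where "s = voff ns m B l"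
  define L where "L = length (v l)"
  define md where "md = mid ns m B l"
  have w: "w = (pre @ v l) @ md @ (v l @ rest)"
    unfolding w_def pre_def rest_def md_def using Ver_split[OF l, of ns B] by (simp add: blk_def)
  have ls: "length pre = s" unfolding pre_def s_def voff_def by simp
  have L0: "0 < L" unfolding L_def by (simp add: v_def)
  have lenw: "s + L + length md + L \<le> length w" using w ls unfolding L_def by simp
  have mdw: "drop (s + L) (take (s + L + length md) w) = md"
  proof -
    have "take (s + L + length md) w = (pre @ v l) @ md"
      unfolding w using ls L_def by simp
    then show ?thesis using ls L_def by simp
  qed
  have sq: "qrun w Q s M'" "tagsok Q s" using S unfolding st_def w_def s_def by auto
  have pops: "\<forall>j<L. (Some (s + j), s + L + length md + j) \<in> M'"
  proof (intro allI impI)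
    fix j assume "j < L"
    then have "(Some (s + j), s + L + length md + j) \<in> M"
      using V l unfolding V_condition_def s_def L_def md_def by blast
    then show "(Some (s + j), s + L + length md + j) \<in> M'"
      using S unfolding st_def s_def by fastforce
  qed
  obtain Q'' M'' where b: "qrun w Q'' (s + L + length md + L) M''" "M'' \<subseteq> M'"
     "\<forall>x\<in>M'. s + L + length md + L \<le> snd x \<longrightarrow> x \<in> M''"
     "tagsok Q'' (s + L + length md + L)" "md \<in> shuffles (map fst Q) (map fst Q'')"
    using block_step[OF sq L0 lenw mdw pops] by blast
  have vs: "voff ns m B (Suc l) = s + L + length md + L"
    unfolding voff_Suc[OF l(1)] s_def L_def md_def by (simp add: blk_def)
  have "st ns m B M (Suc l) Q'' M''"
    unfolding st_def vs
    using b S unfolding w_def st_def s_def by (auto simp: vs)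
  then show ?thesis using b(5) unfolding md_def by blast
qed



lemma kblock:
  assumes inst: "is_3part_instance ns m B" and V: "V_condition ns m B M"
    and k: "1 \<le> k" "k \<le> 3*m"
    and S: "st ns m B M (4*k-3) Q M'" and Qa: "map fst Q = alt ps" and lp: "length ps = 3*m - k + 1"
  shows "\<exists>xs ys Q5 M5. ps = xs @ nn ns k # ys \<and> st ns m B M (4*k+1) Q5 M5 \<and> map fst Q5 = alt (xs @ ys)"
proof -
  define n where "n = nn ns k"
  have lns: "length ns = 3*m" using inst unfolding is_3part_instance_def by simp
  have nin: "n \<in> set ns" unfolding n_def nn_def using k lns by simp
  have nB: "n < B" and n0: "0 < n" using inst nin unfolding is_3part_instance_def by auto
  have la: "1 \<le> 4*k-3" "4*k-3 \<le> 12*m" using k by auto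
  have lb: "1 \<le> 4*k-2" "4*k-2 \<le> 12*m" using k by auto
  have lc: "1 \<le> 4*k-1" "4*k-1 \<le> 12*m" using k by auto
  have ld: "1 \<le> 4*k" "4*k \<le> 12*m" using k by auto
  obtain Q2 M2 where b1: "st ns m B M (Suc (4*k-3)) Q2 M2" "mid ns m B (4*k-3) \<in> shuffles (map fst Q) (map fst Q2)"
    using ver_block[OF V S la] by blast
  have "pw (U n) (length ps) \<in> shuffles (alt ps) (map fst Q2)"
    using b1(2) mid_4k(1)[OF k(1), of ns m B] Qa lp unfolding Dw_def n_def by simp
  from D_step[OF this] have pn: "\<forall>p\<in>set ps. p \<le> n" and Q2a: "map fst Q2 = alt (map (\<lambda>p. n - p) ps)" by auto
  have S2: "st ns m B M (4*k-2) Q2 M2" using b1(1) k by (simp add: Suc_diff_Suc numeral_eq_Suc)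
  obtain Q3 M3 where b2: "st ns m B M (Suc (4*k-2)) Q3 M3" "mid ns m B (4*k-2) \<in> shuffles (map fst Q2) (map fst Q3)"
    using ver_block[OF V S2 lb] by blast
  have "pw (U n) (length (map (\<lambda>p. n - p) ps)) \<in> shuffles (alt (map (\<lambda>p. n - p) ps)) (map fst Q3)"
    using b2(2) mid_4k(2)[OF k(1), of ns m B] Q2a lp unfolding Dw_def n_def by simp
  from D_step[OF this] have "map fst Q3 = alt (map (\<lambda>p. n - p) (map (\<lambda>p. n - p) ps))" by auto
  also have "map (\<lambda>p. n - p) (map (\<lambda>p. n - p) ps) = ps" using pn by (induction ps) auto
  finally have Q3a: "map fst Q3 = alt ps" .
  have S3: "st ns m B M (4*k-1) Q3 M3" using b2(1) k by (simp add: Suc_diff_Suc numeral_eq_Suc)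
  obtain Q4 M4 where b3: "st ns m B M (Suc (4*k-1)) Q4 M4" "mid ns m B (4*k-1) \<in> shuffles (map fst Q3) (map fst Q4)"
    using ver_block[OF V S3 lc] by blast
  have hE: "pw (U B) (3*m-k) @ fac n @ pw (U B) (3*m-k) \<in> shuffles (alt ps) (map fst Q4)"
    using b3(2) mid_4k(3)[OF k(1), of ns m B] Q3a unfolding Ew_def n_def by (simp add: fac_def)
  have S4: "st ns m B M (4*k) Q4 M4" using b3(1) k by simp
  obtain Q5 M5 where b4: "st ns m B M (Suc (4*k)) Q5 M5" "mid ns m B (4*k) \<in> shuffles (map fst Q4) (map fst Q5)"
    using ver_block[OF V S4 ld] by blast
  have hF: "pw (U B) (2*(3*m-k)) \<in> shuffles (map fst Q4) (map fst Q5)"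
    using b4(2) mid_4k(4)[OF k(1), of ns m B] unfolding Fw_def by simp
  have lp': "length ps = Suc (3*m-k)" using lp k by simp
  from EF_step[OF nB n0 pn lp' hE hF] obtain xs ys where "ps = xs @ n # ys" "map fst Q5 = alt (xs @ ys)"
    by blast
  then show ?thesis using b4(1) unfolding n_def by (intro exI[of _ xs] exI[of _ ys] exI[of _ Q5] exI[of _ M5]) simp
qed

lemma main_ind:
  assumes inst: "is_3part_instance ns m B" and V: "V_condition ns m B M"
  shows "d < 3*m \<Longrightarrow> k = 3*m - d \<Longrightarrow> st ns m B M (4*k-3) Q M' \<Longrightarrow> map fst Q = alt ps \<Longrightarrow>
     length ps = 3*m - k + 1 \<Longrightarrow> mset ps = mset (drop (k-1) ns)"
proof (induction d arbitrary: k Q M' ps)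
  case 0
  have lns: "length ns = 3*m" using inst unfolding is_3part_instance_def by simp
  have k: "1 \<le> k" "k \<le> 3*m" using 0 by auto
  obtain xs ys Q5 M5 where h: "ps = xs @ nn ns k # ys" using kblock[OF inst V k 0(3,4,5)] by blast
  then have "xs = []" "ys = []" using 0 by auto
  then have "ps = [ns ! (k-1)]" using h unfolding nn_def by simp
  moreover have "drop (k-1) ns = [ns ! (k-1)]"
  proof -
    have "k - 1 < length ns" using lns k by simp
    then have "drop (k-1) ns = ns ! (k-1) # drop (Suc (k-1)) ns" by (simp add: Cons_nth_drop_Suc)
    moreover have "Suc (k-1) = length ns" using lns k 0 by simp
    ultimately show ?thesis by simp
  qed
  ultimately show ?case by simp
next
  case (Suc d)
  have lns: "length ns = 3*m" using inst unfolding is_3part_instance_def by simp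
  have k: "1 \<le> k" "k \<le> 3*m" using Suc.prems by auto
  obtain xs ys Q5 M5 where h: "ps = xs @ nn ns k # ys" "st ns m B M (4*k+1) Q5 M5" "map fst Q5 = alt (xs @ ys)"
    using kblock[OF inst V k Suc.prems(3,4,5)] by blast
  have k1: "k + 1 = 3*m - d" using Suc.prems by simp
  have "st ns m B M (4*(k+1)-3) Q5 M5" using h(2) by simp
  moreover have "length (xs @ ys) = 3*m - (k+1) + 1" using Suc.prems h(1) by simp
  ultimately have ih: "mset (xs @ ys) = mset (drop (k+1-1) ns)"
    using Suc.IH[OF _ k1 _ h(3)] Suc.prems by simp
  have "drop (k-1) ns = ns ! (k-1) # drop k ns"
  proof -
    have "k - 1 < length ns" using lns k by simp
    then have "drop (k-1) ns = ns ! (k-1) # drop (Suc (k-1)) ns" by (simp add: Cons_nth_drop_Suc)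
    then show ?thesis using k by simp
  qed
  then show ?case using ih h(1) unfolding nn_def by simp
qed

lemma partition_from_mset:
  assumes lns: "length ns = 3*m"
    and ms: "mset (map ik [1..<3*m+1]) = mset ns"
    and tri: "\<forall>j. 1 \<le> j \<and> j \<le> m \<longrightarrow> ik (3*j-2) + ik (3*j-1) + ik (3*j) = B"
  shows "is_yes_3part ns m B"
proof -
  obtain p where p: "p permutes {..<length ns}" "permute_list p ns = map ik [1..<3*m+1]"
    using mset_eq_permutation[OF ms] by blast
  have p3: "p permutes {..<3*m}" using p(1) lns by simp
  have hp: "ns ! (p a) = ik (Suc a)" if "a < 3*m" for a
  proof -
    have "permute_list p ns ! a = ns ! p a" using permute_list_nth[OF p(1)] that lns by simp
    moreover have "[1..<3*m+1] ! a = 1 + a" by (rule nth_upt) (use that in simp)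
    moreover have "map ik [1..<3*m+1] ! a = ik ([1..<3*m+1] ! a)" by (rule nth_map) (use that in simp)
    ultimately show ?thesis using p(2) by simp
  qed
  have ip: "inv p permutes {..<3*m}" using permutes_inv[OF p3] .
  define f where "f i = inv p i div 3" for i
  show ?thesis
    unfolding is_yes_3part_def
  proof (intro exI[of _ f] conjI allI impI)
    fix i assume "i < 3*m"
    then have "inv p i < 3*m" using permutes_in_image[OF ip] by simp
    then show "f i < m" unfolding f_def by simp
  next
    fix j assume j: "j < m"
    have seq: "{i. i < 3*m \<and> f i = j} = p ` {3*j, 3*j+1, 3*j+2}"
    proof (intro set_eqI iffI)
      fix i assume "i \<in> {i. i < 3*m \<and> f i = j}"
      then have i: "i < 3*m" "inv p i div 3 = j" unfolding f_def by auto
      then have "inv p i \<in> {3*j, 3*j+1, 3*j+2}" by auto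
      moreover have "i = p (inv p i)" using permutes_inverses(1)[OF p3] by simp
      ultimately show "i \<in> p ` {3*j, 3*j+1, 3*j+2}" by blast
    next
      fix i assume "i \<in> p ` {3*j, 3*j+1, 3*j+2}"
      then obtain a where a: "a \<in> {3*j, 3*j+1, 3*j+2}" "i = p a" by blast
      have "a < 3*m" using a j by auto
      then have "i < 3*m" using a permutes_in_image[OF p3] by simp
      moreover have "inv p i = a" using a permutes_inverses(2)[OF p3] by simp
      ultimately show "i \<in> {i. i < 3*m \<and> f i = j}" using a unfolding f_def by auto
    qed
    have injp: "inj_on p {3*j, 3*j+1, 3*j+2}" using permutes_inj[OF p3] by (simp add: inj_on_def inj_def)
    show "card {i. i < 3*m \<and> f i = j} = 3"
      unfolding seq card_image[OF injp] by simp
    have "(\<Sum>i\<in>p ` {3*j, 3*j+1, 3*j+2}. ns ! i) = (\<Sum>a\<in>{3*j, 3*j+1, 3*j+2}. ns ! p a)"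
      using sum.reindex[OF injp, of "\<lambda>i. ns ! i"] by (simp only: comp_def)
    then have "(\<Sum>i\<in>{i. i < 3*m \<and> f i = j}. ns ! i) = (\<Sum>a\<in>{3*j, 3*j+1, 3*j+2}. ns ! p a)"
      unfolding seq .
    also have "\<dots> = ik (Suc (3*j)) + ik (Suc (Suc (3*j))) + ik (Suc (Suc (Suc (3*j))))"
      using hp j by simp
    also have "\<dots> = B"
    proof -
      have e1: "3*Suc j - 2 = Suc (3*j)" "3*Suc j - 1 = Suc (Suc (3*j))" "3*Suc j = Suc (Suc (Suc (3*j)))"
        by simp_all
      have jj: "1 \<le> Suc j \<and> Suc j \<le> m" using j by simp
      have t: "ik (3*Suc j - 2) + ik (3*Suc j - 1) + ik (3*Suc j) = B" using tri jj by blast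
      show ?thesis using t[unfolded e1(3)] by simp
    qed
    finally show "(\<Sum>i | i < 3*m \<and> f i = j. ns ! i) = B" .
  qed
qed

theorem lemma8:
  fixes ns :: "nat list" and m B :: nat and ik :: "nat \<Rightarrow> nat"
    and M :: "(nat option \<times> nat) set"
  assumes "is_3part_instance ns m B"
    and "sorted_wrt (\<ge>) ns"
    and "\<forall>j. 1 \<le> j \<and> j \<le> m \<longrightarrow> ik (3*j-2) + ik (3*j-1) + ik (3*j) = B"
    and "qrun (Ver ns m B) (map (\<lambda>s. (s, None)) (Wq m ik)) 0 M"
    and "V_condition ns m B M"
  shows "is_yes_3part ns m B"
proof -
  have lns: "length ns = 3*m" and m0: "0 < m" using assms(1) unfolding is_3part_instance_def by auto
  define Q0 where "Q0 = map (\<lambda>s. (s, None :: nat option)) (Wq m ik)"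
  have v1: "voff ns m B (4*1-3) = 0" unfolding voff_def by simp
  have S: "st ns m B M (4*1-3) Q0 M"
    unfolding st_def v1 Q0_def using assms(4) by (auto simp: tagsok_def)
  have Qa: "map fst Q0 = alt (map ik [1..<3*m+1])"
    unfolding Q0_def by (simp add: Wq_def alt_def fac_def comp_def)
  have "mset (map ik [1..<3*m+1]) = mset (drop (1-1) ns)"
    by (rule main_ind[OF assms(1) assms(5), of "3*m-1" 1 Q0 M]) (use S Qa m0 in auto)
  then have "mset (map ik [1..<3*m+1]) = mset ns" by simp
  then show ?thesis using partition_from_mset[OF lns _ assms(3)] by blast
qed

end
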